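(* Let $q=q_0^2$ be odd and let $V$ be a vector space over $\mathbb{F}_q$ with a non-degenerate hermitian form $f$. Let $s\ge1$ and let $v=\sum_{i=1}^s v_i$ for singular vectors $v_1,\dots,v_s\in V$. Then there exist $1\le i\le s$ and $\lambda\in\mathbb{F}_{q_0}$ such that $v-\lambda v_i$ is singular.
   Context: The hermitian form satisfies $f(u,\lambda v+w)=\lambda f(u,v)+f(u,w)$ and $f(w,u)=f(u,w)^{q_0}$. A vector $v$ is singular if $f(v,v)=0$. *)

theory Defs
  imports Complex_Main "HOL-Library.Cardinality"
begin

text \<open>A hermitian form on the vector space V (given by the scalar multiplication
  scale over the field F_q, q = q0^2), linear in the second argument, with
  field involution x \<mapsto> x^q0.\<close>

definition hermitian_form ::
  "('k::field \<Rightarrow> 'v::ab_group_add \<Rightarrow> 'v) \<Rightarrow> nat \<Rightarrow> ('v \<Rightarrow> 'v \<Rightarrow> 'k) \<Rightarrow> bool" where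
  "hermitian_form scale q0 f \<longleftrightarrow>
     (\<forall>u v w c. f u (scale c v + w) = c * f u v + f u w) \<and>
     (\<forall>u w. f w u = f u w ^ q0)"

definition nondegenerate :: "('v::zero \<Rightarrow> 'v \<Rightarrow> 'k::zero) \<Rightarrow> bool" where
  "nondegenerate f \<longleftrightarrow> (\<forall>u. (\<forall>v. f u v = 0) \<longrightarrow> u = 0)"

definition singular :: "('v \<Rightarrow> 'v \<Rightarrow> 'k::zero) \<Rightarrow> 'v \<Rightarrow> bool" where
  "singular f v \<longleftrightarrow> f v v = 0"

definition subfield_Fq0 :: "nat \<Rightarrow> 'k::field set" where
  "subfield_Fq0 q0 = {x. x ^ q0 = x}"

end

theory Submission
  imports Defs "HOL-Number_Theory.Number_Theory"
begin


definition addsub :: "'k::field set \<Rightarrow> bool" where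
  "addsub W \<longleftrightarrow> 0 \<in> W \<and> (\<forall>a\<in>W. \<forall>b\<in>W. a + b \<in> W) \<and> (\<forall>a\<in>W. -a \<in> W)"

lemma addsub_ofnat:
  assumes "addsub W" "y \<in> W" shows "of_nat e * y \<in> W"
  using assms by (induction e) (auto simp: addsub_def distrib_right)

lemma grow_card:
  fixes W :: "'k::{field,finite} set"
  assumes "addsub W"
  shows "\<exists>n. CARD('k) = card W * CHAR('k) ^ n"
  using assms
proof (induction "card (UNIV - W)" arbitrary: W rule: less_induct)
  case less
  define p where "p = CHAR('k)"
  have pp: "prime p" unfolding p_def
    by (simp add: finite_imp_CHAR_pos prime_CHAR_semidom)
  show ?case
  proof (cases "W = UNIV")
    case True then show ?thesis by (intro exI[of _ 0]) auto
  next
    case False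
    then obtain x where x: "x \<notin> W" by auto
    define W' where "W' = (\<lambda>(w,i). w + of_nat i * x) ` (W \<times> {..<p})"
    have W'alt: "W' = {w + of_nat i * x |w i. w \<in> W}"
    proof -
      have "w + of_nat i * x \<in> W'" if "w \<in> W" for w i
      proof -
        have "(of_nat i :: 'k) = of_nat (i mod p)"
          by (simp add: of_nat_eq_iff_cong_CHAR p_def cong_def)
        moreover have "i mod p < p" using pp prime_gt_0_nat by auto
        ultimately show ?thesis unfolding W'_def using that by (auto intro!: image_eqI[of _ _ "(w, i mod p)"])
      qed
      then show ?thesis unfolding W'_def by auto
    qed
    have negi: "- (of_nat i :: 'k) = of_nat ((p - 1) * i)" for i
    proof -
      have "(of_nat ((p - 1) * i) :: 'k) + of_nat i = of_nat (p * i)"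
        using pp prime_gt_0_nat[OF pp] by (simp add: algebra_simps flip: of_nat_add)
      also have "\<dots> = 0" by (simp add: p_def)
      finally show ?thesis by (metis add.commute minus_unique)
    qed
    have sub': "addsub W'"
      unfolding addsub_def W'alt
    proof (intro conjI ballI)
      show "0 \<in> {w + of_nat i * x |w i. w \<in> W}"
        using less.prems by (auto simp: addsub_def intro!: exI[of _ 0])
    next
      fix a b assume "a \<in> {w + of_nat i * x |w i. w \<in> W}" "b \<in> {w + of_nat i * x |w i. w \<in> W}"
      then obtain w1 i1 w2 i2 where "a = w1 + of_nat i1 * x" "b = w2 + of_nat i2 * x" "w1 \<in> W" "w2 \<in> W"
        by auto
      then show "a + b \<in> {w + of_nat i * x |w i. w \<in> W}"
        using less.prems unfolding addsub_def
        by (intro CollectI exI[of _ "w1 + w2"] exI[of _ "i1 + i2"]) (auto simp: algebra_simps)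
    next
      fix a assume "a \<in> {w + of_nat i * x |w i. w \<in> W}"
      then obtain w1 i1 where "a = w1 + of_nat i1 * x" "w1 \<in> W" by auto
      then show "- a \<in> {w + of_nat i * x |w i. w \<in> W}"
        using less.prems unfolding addsub_def
      proof -
        have "- a = - w1 + of_nat ((p - 1) * i1) * x"
          using \<open>a = w1 + of_nat i1 * x\<close> negi[of i1] by (metis minus_add_distrib mult_minus_left)
        moreover have "- w1 \<in> W" using \<open>w1 \<in> W\<close> less.prems unfolding addsub_def by blast
        ultimately show ?thesis by blast
      qed
    qed
    have inj: "inj_on (\<lambda>(w,i). w + of_nat i * x) (W \<times> {..<p})"
    proof (rule inj_onI, clarify)
      fix w i w' j assume h: "w \<in> W" "i < p" "w' \<in> W" "j < p" "w + of_nat i * (x::'k) = w' + of_nat j * x"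
      have main: "i = j" if h2: "w + of_nat i * (x::'k) = w' + of_nat j * x" "w \<in> W" "w' \<in> W" "j < i" "i < p" for w w' i j
      proof -
        have e1: "of_nat (i - j) * x = w' - w" using h2 by (simp add: of_nat_diff algebra_simps)
        have e2: "w' - w \<in> W"
        proof -
          have "w' + (- w) \<in> W" using h2 less.prems unfolding addsub_def by blast
          then show ?thesis by simp
        qed
        have "coprime (i - j) p"
        proof -
          have "\<not> p dvd (i - j)" using h2 by (auto dest: dvd_imp_le)
          then show ?thesis using prime_imp_coprime[OF pp] coprime_commute by blast
        qed
        then have g1: "gcd (i - j) p = 1" by (rule coprime_imp_gcd_eq_1)
        obtain e where "[(i - j) * e = gcd (i - j) p] (mod p)"
          using cong_solve_nat[of "i - j" p] by blast
        then have "[(i - j) * e = 1] (mod p)" unfolding g1 .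
        then have e3: "(of_nat e :: 'k) * of_nat (i - j) = 1"
          by (metis mult.commute of_nat_1 of_nat_eq_iff_cong_CHAR of_nat_mult p_def)
        have "x = of_nat e * (w' - w)"
          using e1 e3 by (metis mult.assoc mult_1)
        then have "x \<in> W" using addsub_ofnat[OF less.prems \<open>w' - w \<in> W\<close>] by simp
        with x show ?thesis by simp
      qed
      have "i = j"
        using main[of w i w' j] main[of w' j w i] h by (metis linorder_neqE_nat)
      then show "w = w' \<and> i = j" using h by simp
    qed
    have cW': "card W' = card W * p"
      unfolding W'_def by (simp add: card_image[OF inj] card_cartesian_product)
    have "0 \<in> W" using less.prems by (simp add: addsub_def)
    have "W \<subseteq> W'" unfolding W'alt
    proof
      fix w assume "w \<in> W"
      then show "w \<in> {w + of_nat i * x |w i. w \<in> W}"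
        by (intro CollectI exI[of _ w] exI[of _ 0]) simp
    qed
    moreover have "x \<in> W'" unfolding W'alt using \<open>0 \<in> W\<close>
      by (intro CollectI exI[of _ 0] exI[of _ 1]) simp
    ultimately have "card (UNIV - W') < card (UNIV - W)"
      using x by (intro psubset_card_mono) auto
    from less.hyps[OF this sub'] obtain n where "CARD('k) = card W' * CHAR('k) ^ n" by blast
    then show ?thesis using cW' by (intro exI[of _ "Suc n"]) (simp add: p_def mult_ac)
  qed
qed

lemma card_char_power:
  "\<exists>n. CARD('k::{field,finite}) = CHAR('k) ^ n"
proof -
  have "addsub ({0} :: 'k set)" by (simp add: addsub_def)
  from grow_card[OF this] show ?thesis by simp
qed


lemma field_pow_card:
  fixes x :: "'k::{field,finite}"
  shows "x ^ CARD('k) = x"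
proof (cases "x = 0")
  case False
  have "x * (\<Prod>y\<in>UNIV-{0}. x * y) = x * x ^ (CARD('k) - 1) * \<Prod>(UNIV-{0::'k})"
    by (simp add: prod.distrib mult_ac)
  also have "x * x ^ (CARD('k) - 1) = x ^ Suc (CARD('k) - 1)"
    by (subst power_Suc) auto
  also have "Suc (CARD('k) - 1) = CARD('k)"
    using finite_UNIV_card_ge_0[where ?'a = 'k] by simp
  also have "(\<Prod>y\<in>UNIV-{0}. x * y) = (\<Prod>y\<in>UNIV-{0::'k}. y)"
    by (rule prod.reindex_bij_witness[of _ "\<lambda>y. y / x" "\<lambda>y. x * y"]) (use False in auto)
  finally show ?thesis
    by simp
qed (use finite_UNIV_card_ge_0[where ?'a = 'k] in auto)

lemma frob_add:
  fixes x y :: "'k::{field,finite}"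
  assumes "CARD('k) = q0 ^ 2"
  shows "(x + y) ^ q0 = x ^ q0 + y ^ q0"
proof -
  have pp: "prime CHAR('k)"
    by (simp add: finite_imp_CHAR_pos prime_CHAR_semidom)
  obtain n where n: "CARD('k) = CHAR('k) ^ n" using card_char_power by blast
  have "q0 ^ 2 = CHAR('k) ^ n" using assms n by simp
  then obtain i where "normalize q0 = normalize (CHAR('k) ^ i)"
    using power_eq_prime_powerD[OF pp, of 2 q0 n] by auto
  then have "q0 = CHAR('k) ^ i" by simp
  then show ?thesis using freshmans_dream'[OF pp] by blast
qed

theorem lemma4p19:
  fixes scale :: "'k::{field,finite} \<Rightarrow> 'v::ab_group_add \<Rightarrow> 'v"
    and q0 :: nat
    and f :: "'v \<Rightarrow> 'v \<Rightarrow> 'k"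
    and s :: nat
    and vs :: "nat \<Rightarrow> 'v"
  assumes "CARD('k) = q0 ^ 2"
    and "odd CARD('k)"
    and "Vector_Spaces.vector_space scale"
    and "hermitian_form scale q0 f"
    and "nondegenerate f"
    and "s \<ge> 1"
    and "\<forall>i\<in>{1..s}. singular f (vs i)"
  shows "\<exists>i\<in>{1..s}. \<exists>c\<in>subfield_Fq0 q0.
           singular f ((\<Sum>j=1..s. vs j) - scale c (vs i))"

proof -
  note card = assms(1)
  interpret V: Vector_Spaces.vector_space scale by (rule assms(3))
  have lin: "\<And>u v w c. f u (scale c v + w) = c * f u v + f u w"
    and sym: "\<And>u w. f w u = f u w ^ q0"
    using assms(4) unfolding hermitian_form_def by blast+
  define phi :: "'k \<Rightarrow> 'k" where "phi x = x ^ q0" for x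
  have q0pos: "q0 > 0"
  proof (rule ccontr)
    assume "\<not> q0 > 0"
    then have "CARD('k) = 0" using card by simp
    then show False by simp
  qed
  have padd: "phi (x + y) = phi x + phi y" for x y
    unfolding phi_def by (rule frob_add[OF card])
  have p0: "phi 0 = 0" unfolding phi_def using q0pos by simp
  have pminus: "phi (- x) = - phi x" for x
    using padd[of x "- x"] p0 by (metis add.commute minus_unique add.right_inverse)
  have pdiff: "phi (x - y) = phi x - phi y" for x y
    using padd[of x "- y"] pminus[of y] by simp
  have pmult: "phi (x * y) = phi x * phi y" for x y
    unfolding phi_def by (simp add: power_mult_distrib)
  have pdiv: "phi (x / y) = phi x / phi y" for x y
    unfolding phi_def by (simp add: power_divide)
  have pp: "phi (phi x) = x" for x
    unfolding phi_def using field_pow_card[of x] card by (simp add: power_mult[symmetric] power2_eq_square)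
  have psum: "phi (sum g B) = sum (\<lambda>j. phi (g j)) B" for g :: "nat \<Rightarrow> 'k" and B
    by (induction B rule: infinite_finite_induct) (auto simp: p0 padd)
  have sym': "f w u = phi (f u w)" for u w unfolding phi_def by (rule sym)
  have add2: "f u (a + b) = f u a + f u b" for u a b
    using lin[of u 1 a b] by simp
  have zero2: "f u 0 = 0" for u
  proof -
    have "f u 0 + 0 = f u 0 + f u 0" using add2[of u 0 0] by simp
    then show ?thesis by (metis add_left_cancel)
  qed
  have sub2: "f u (b - scale c a) = f u b - c * f u a" for u a b c
  proof -
    have "b - scale c a = scale (- c) a + b" by (simp add: V.scale_minus_left)
    then show ?thesis using lin[of u "- c" a b] by simp
  qed
  have sum2: "f u (sum g B) = (\<Sum>j\<in>B. f u (g j))" for u and g :: "nat \<Rightarrow> 'v" and B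
    by (induction B rule: infinite_finite_induct) (auto simp: zero2 add2)
  define v where "v = (\<Sum>j=1..s. vs j)"
  define A where "A = f v v"
  define a where "a i = f v (vs i)" for i
  have Asum: "A = (\<Sum>j=1..s. a j)" unfolding A_def a_def v_def by (rule sum2)
  have pA: "phi A = A" unfolding A_def using sym'[of v v] by simp
  have key: "f (v - scale c (vs i)) (v - scale c (vs i)) = A - c * (a i + phi (a i))"
    if i: "i \<in> {1..s}" and c: "phi c = c" for i c
  proof -
    define w where "w = v - scale c (vs i)"
    have si: "f (vs i) (vs i) = 0" using assms(7) i unfolding singular_def by blast
    have h1: "f w v = A - c * phi (a i)"
    proof -
      have "f w v = phi (f v w)" by (rule sym')
      also have "f v w = A - c * a i" unfolding w_def A_def a_def by (rule sub2)
      finally show ?thesis using pdiff pmult pA c by simp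
    qed
    have h2: "f w (vs i) = a i"
    proof -
      have "f w (vs i) = phi (f (vs i) w)" by (rule sym')
      also have "f (vs i) w = f (vs i) v - c * f (vs i) (vs i)" unfolding w_def by (rule sub2)
      also have "\<dots> = phi (a i)"
      proof -
        have "f (vs i) v = phi (a i)" unfolding a_def by (rule sym')
        then show ?thesis using si by simp
      qed
      finally show ?thesis using pp by simp
    qed
    have "f w w = f w v - c * f w (vs i)" unfolding w_def by (rule sub2)
    then show ?thesis using h1 h2 unfolding w_def by (simp add: algebra_simps)
  qed
  show ?thesis
  proof (cases "A = 0")
    case True
    have "1 \<in> {1..s}" using assms(6) by simp
    moreover have "phi 0 = 0" by (rule p0)
    ultimately show ?thesis
      using key[of 1 0] True unfolding singular_def subfield_Fq0_def v_def phi_def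
      by (intro bexI[of _ 1] bexI[of _ 0]) auto
  next
    case False
    define T where "T i = a i + phi (a i)" for i
    have "(\<Sum>j=1..s. T j) = A + phi A"
      unfolding T_def by (simp add: sum.distrib Asum psum)
    also have "\<dots> = 2 * A" using pA by simp
    finally have sT: "(\<Sum>j=1..s. T j) = 2 * A" .
    have two: "(2::'k) \<noteq> 0"
    proof
      assume "(2::'k) = 0"
      then have "(of_nat 2 :: 'k) = 0" by simp
      then have "CHAR('k) dvd 2" by (simp only: of_nat_eq_0_iff_char_dvd)
      moreover have "CHAR('k) dvd CARD('k)" by (rule CHAR_dvd_CARD)
      moreover have "prime CHAR('k)"
        by (simp add: finite_imp_CHAR_pos prime_CHAR_semidom)
      ultimately have c2: "CHAR('k) = 2"
        using dvd_imp_le[of "CHAR('k)" 2] prime_ge_2_nat[of "CHAR('k)"] by simp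
      have "2 dvd CARD('k)" using \<open>CHAR('k) dvd CARD('k)\<close> unfolding c2 .
      then show False using assms(2) by simp
    qed
    have "(\<Sum>j=1..s. T j) \<noteq> 0" using sT two False by simp
    then obtain i where i: "i \<in> {1..s}" "T i \<noteq> 0"
      by (meson sum.neutral)
    define c where "c = A / T i"
    have pT: "phi (T i) = T i" unfolding T_def using padd pp by (simp add: add.commute)
    have pc: "phi c = c" unfolding c_def using pdiv pA pT by simp
    have "f (v - scale c (vs i)) (v - scale c (vs i)) = 0"
      using key[OF i(1) pc] i(2) unfolding T_def[symmetric] c_def by simp
    then show ?thesis
      using i(1) pc unfolding singular_def subfield_Fq0_def v_def phi_def
      by (intro bexI[of _ i] bexI[of _ c]) auto
  qed
qed

end
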